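(* For every fixed $k\in\mathbb{N}$, the values $\tau_{n,k}$ decrease strictly in $n$: $$\tau_{n+1,k}<\tau_{n,k}<\cdots<\tau_{k+3,k}<\tau_{k+2,k}\qquad (n\ge k+2).$$ In particular, for every fixed $k\in\mathbb{N}$ and every $m\ge 2$, $\tau_{n,k}\le\tau_{k+m,k}$ for all $n\ge k+m$.
   Context: $T_n$ denotes the Chebyshev polynomial of the first kind of degree $n$, $T_n(\cos\theta)=\cos n\theta$. For integers $n\ge k+2$, $k\ge 1$, let $\omega_{n,k}$ be the rightmost (largest) zero of $T_n^{(k+1)}$ and define $\tau_{n,k}:=|T_n^{(k)}(\omega_{n,k})|/T_n^{(k)}(1)$. *)

theory Defs
  imports "HOL-Computational_Algebra.Polynomial"
begin

fun cheb_T :: "nat \<Rightarrow> real poly" where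
  "cheb_T 0 = 1"
| "cheb_T (Suc 0) = [:0, 1:]"
| "cheb_T (Suc (Suc n)) = smult 2 ([:0, 1:] * cheb_T (Suc n)) - cheb_T n"

definition cheb_deriv :: "nat \<Rightarrow> nat \<Rightarrow> real poly" where
  "cheb_deriv n k = (pderiv ^^ k) (cheb_T n)"

definition omega :: "nat \<Rightarrow> nat \<Rightarrow> real" where
  "omega n k = Max {x. poly (cheb_deriv n (Suc k)) x = 0}"

definition tau :: "nat \<Rightarrow> nat \<Rightarrow> real" where
  "tau n k = \<bar>poly (cheb_deriv n k) (omega n k)\<bar> / poly (cheb_deriv n k) 1"

end

theory Submission
  imports Defs
begin


abbreviation X :: "real poly" where "X \<equiv> [:0,1:]"

fun Uc :: "nat \<Rightarrow> real poly" where
  "Uc 0 = 0"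
| "Uc (Suc 0) = 1"
| "Uc (Suc (Suc n)) = smult 2 (X * Uc (Suc n)) - Uc n"

lemma smult2: "smult (c::real) p = [:c:] * p" by simp

lemma TU: "cheb_T (Suc n) = X * Uc (Suc n) - Uc n \<and> cheb_T n = Uc (Suc n) - X * Uc n"
proof (induction n rule: cheb_T.induct)
  case 1 then show ?case by simp
next
  case 2 then show ?case by (simp only: cheb_T.simps Uc.simps) (auto intro!: poly_ext simp: algebra_simps)
next
  case (3 n)
  then show ?case
    by (simp only: cheb_T.simps Uc.simps) (auto intro!: poly_ext simp: algebra_simps)
qed

lemma dT: "pderiv (cheb_T n) = smult (real n) (Uc n)"
proof (induction n rule: cheb_T.induct)
  case 1 then show ?case by simp
next
  case 2 then show ?case by (simp add: pderiv_pCons)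
next
  case (3 n)
  have t: "cheb_T (Suc n) = X * Uc (Suc n) - Uc n" using TU by blast
  show ?case
    using 3 t
    apply (simp only: cheb_T.simps Uc.simps pderiv_diff pderiv_smult pderiv_mult)
    apply (intro poly_ext)
    apply (simp add: pderiv_pCons algebra_simps)
    done
qed

lemma cd_Suc: "cheb_deriv n (Suc j) = pderiv (cheb_deriv n j)"
  by (simp add: cheb_deriv_def)
lemma cd_0: "cheb_deriv n 0 = cheb_T n"
  by (simp add: cheb_deriv_def)

lemma I1_0: "smult (real n) (pderiv (cheb_T (Suc n))) =
   smult (real n + 1) (X * pderiv (cheb_T n) + smult (real n) (cheb_T n))"
proof -
  have t: "cheb_T n = Uc (Suc n) - X * Uc n" using TU by blast
  show ?thesis unfolding dT unfolding t by (intro poly_ext) (simp add: algebra_simps)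
qed

lemma I2_0: "smult (real n * (real n + 1)) (cheb_T (Suc n)) =
   smult (real n) (X * pderiv (cheb_T (Suc n))) - smult (real n + 1) (pderiv (cheb_T n))"
proof -
  have t: "cheb_T (Suc n) = X * Uc (Suc n) - Uc n" using TU by blast
  show ?thesis unfolding dT unfolding t by (intro poly_ext) (simp add: algebra_simps)
qed

lemma S_0: "[:1,0,-1:] * pderiv (cheb_T n) = smult (real n) (X * cheb_T n - cheb_T (Suc n))"
proof -
  have t: "cheb_T (Suc n) = X * Uc (Suc n) - Uc n" "cheb_T n = Uc (Suc n) - X * Uc n" using TU by blast+
  show ?thesis unfolding dT unfolding t by (intro poly_ext) (simp add: algebra_simps)
qed

lemma I1: "smult (real n) (cheb_deriv (Suc n) (Suc k)) =
   smult (real n + 1) (X * cheb_deriv n (Suc k) + smult (real n + real k) (cheb_deriv n k))"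
proof (induction k)
  case 0 then show ?case using I1_0 by (simp add: cd_Suc cd_0)
next
  case (Suc k)
  have "pderiv (smult (real n) (cheb_deriv (Suc n) (Suc k))) = pderiv (smult (real n + 1) (X * cheb_deriv n (Suc k) + smult (real n + real k) (cheb_deriv n k)))"
    using Suc by simp
  then have "\<And>x. poly (pderiv (smult (real n) (cheb_deriv (Suc n) (Suc k)))) x = poly (pderiv (smult (real n + 1) (X * cheb_deriv n (Suc k) + smult (real n + real k) (cheb_deriv n k)))) x"
    by simp
  then show ?case
    by (intro poly_ext) (simp add: cd_Suc[symmetric] pderiv_mult pderiv_smult pderiv_add pderiv_pCons algebra_simps)
qed

lemma I2: "smult (real n * (real n + 1 - real k)) (cheb_deriv (Suc n) k) =
   smult (real n) (X * cheb_deriv (Suc n) (Suc k)) - smult (real n + 1) (cheb_deriv n (Suc k))"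
proof (induction k)
  case 0 then show ?case using I2_0 by (simp add: cd_Suc cd_0)
next
  case (Suc k)
  have "pderiv (smult (real n * (real n + 1 - real k)) (cheb_deriv (Suc n) k)) =
   pderiv (smult (real n) (X * cheb_deriv (Suc n) (Suc k)) - smult (real n + 1) (cheb_deriv n (Suc k)))"
    using Suc by simp
  then have "\<And>x. poly (pderiv (smult (real n * (real n + 1 - real k)) (cheb_deriv (Suc n) k))) x =
   poly (pderiv (smult (real n) (X * cheb_deriv (Suc n) (Suc k)) - smult (real n + 1) (cheb_deriv n (Suc k)))) x"
    by simp
  then show ?case
    by (intro poly_ext) (simp add: cd_Suc[symmetric] pderiv_mult pderiv_smult pderiv_diff pderiv_pCons algebra_simps)
qed

lemma pd1: "poly (pderiv ([:1,0,-1:] * p)) x = (1 - x*x) * poly (pderiv p) x - 2*x*(poly p x :: real)"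
  by (simp add: pderiv_add pderiv_smult pderiv_pCons pderiv_minus algebra_simps)
lemma pdX: "poly (pderiv (X * p)) x = poly p x + x * poly (pderiv p) (x::real)"
  by (simp add: pderiv_mult pderiv_pCons algebra_simps)
lemma p1: "poly ([:1,0,-1:] * p) x = (1 - x*x) * (poly p x :: real)"
  by (simp add: algebra_simps)

lemma ODE0: "[:1,0,-1:] * pderiv (pderiv (cheb_T n)) =
    X * pderiv (cheb_T n) - smult ((real n)^2) (cheb_T n)"
proof (intro poly_ext)
  fix x :: real
  have e1: "poly (pderiv ([:1,0,-1:] * pderiv (cheb_T n))) x = poly (pderiv (smult (real n) (X * cheb_T n - cheb_T (Suc n)))) x"
    using S_0 by simp
  have e2: "poly (smult (real n) (pderiv (cheb_T (Suc n)))) x =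
   poly (smult (real n + 1) (X * pderiv (cheb_T n) + smult (real n) (cheb_T n))) x"
    using I1_0 by simp
  have e1': "(1 - x*x) * poly (pderiv (pderiv (cheb_T n))) x - 2*x*poly (pderiv (cheb_T n)) x
     = real n * (poly (cheb_T n) x + x * poly (pderiv (cheb_T n)) x - poly (pderiv (cheb_T (Suc n))) x)"
    using e1 by (simp only: pd1 pderiv_smult pderiv_diff poly_smult poly_diff pdX)
  have e2': "real n * poly (pderiv (cheb_T (Suc n))) x = (real n + 1) * (x * poly (pderiv (cheb_T n)) x + real n * poly (cheb_T n) x)"
    using e2 by (simp add: algebra_simps)
  have "real n * ((1 - x*x) * poly (pderiv (pderiv (cheb_T n))) x - (x * poly (pderiv (cheb_T n)) x - (real n)^2 * poly (cheb_T n) x)) = 0"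
    using e1' e2' by (simp add: algebra_simps power2_eq_square)
  then have "n = 0 \<or> (1 - x*x) * poly (pderiv (pderiv (cheb_T n))) x = x * poly (pderiv (cheb_T n)) x - (real n)^2 * poly (cheb_T n) x"
    by simp
  then show "poly ([:1,0,-1:] * pderiv (pderiv (cheb_T n))) x = poly (X * pderiv (cheb_T n) - smult ((real n)^2) (cheb_T n)) x"
    by (auto simp: algebra_simps)
qed

lemma ODE: "[:1,0,-1:] * cheb_deriv n (Suc (Suc j)) =
    smult (2 * real j + 1) (X * cheb_deriv n (Suc j)) - smult ((real n)^2 - (real j)^2) (cheb_deriv n j)"
proof (induction j)
  case 0 then show ?case using ODE0 by (simp add: cd_Suc cd_0)
next
  case (Suc j)
  have "\<And>x. poly (pderiv ([:1,0,-1:] * cheb_deriv n (Suc (Suc j)))) x =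
    poly (pderiv (smult (2 * real j + 1) (X * cheb_deriv n (Suc j)) - smult ((real n)^2 - (real j)^2) (cheb_deriv n j))) x"
    using Suc by simp
  then have "\<And>x. (1 - x*x) * poly (cheb_deriv n (Suc (Suc (Suc j)))) x - 2*x*poly (cheb_deriv n (Suc (Suc j))) x =
     (2 * real j + 1) * (poly (cheb_deriv n (Suc j)) x + x * poly (cheb_deriv n (Suc (Suc j))) x)
     - ((real n)^2 - (real j)^2) * poly (cheb_deriv n (Suc j)) x"
    by (simp only: pd1 pderiv_smult pderiv_diff poly_smult poly_diff pdX cd_Suc[symmetric])
  then show ?case
    by (intro poly_ext) (simp only: p1 poly_smult poly_diff poly_mult, simp add: algebra_simps power2_eq_square)
qed



lemma T_at1: "poly (cheb_T n) 1 = 1"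
  by (induction n rule: cheb_T.induct) simp_all

lemma deg_T: "degree (cheb_T n) \<le> n"
proof (induction n rule: cheb_T.induct)
  case (3 n)
  have a: "degree (smult 2 (X * cheb_T (Suc n))) \<le> Suc (Suc n)"
    using degree_mult_le[of X "cheb_T (Suc n)"] 3(1) degree_smult_le[of 2 "X * cheb_T (Suc n)"]
    by simp
  show ?case using degree_diff_le[OF a, of "cheb_T n"] 3(2) by simp
qed auto

lemma deg_D: "degree (cheb_deriv n j) \<le> n - j"
proof (induction j)
  case 0 then show ?case using deg_T by (simp add: cd_0)
next
  case (Suc j) then show ?case by (simp add: cd_Suc degree_pderiv)
qed

lemma D_Suc_n: "cheb_deriv n (Suc n) = 0"
  using deg_D[of n n] by (simp add: cd_Suc pderiv_eq_0_iff)

lemma D_n_const: "poly (cheb_deriv n n) x = poly (cheb_deriv n n) y"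
proof -
  have "degree (cheb_deriv n n) = 0" using deg_D[of n n] by simp
  then obtain a where "cheb_deriv n n = [:a:]" using degree0_coeffs by blast
  then show ?thesis by simp
qed

lemma ODE_pt: "(1 - x*x) * poly (cheb_deriv n (Suc (Suc j))) x =
    (2 * real j + 1) * x * poly (cheb_deriv n (Suc j)) x - ((real n)^2 - (real j)^2) * poly (cheb_deriv n j) x"
proof -
  have "poly ([:1,0,-1:] * cheb_deriv n (Suc (Suc j))) x =
    poly (smult (2 * real j + 1) (X * cheb_deriv n (Suc j)) - smult ((real n)^2 - (real j)^2) (cheb_deriv n j)) x"
    using ODE by simp
  then show ?thesis by (simp only: p1 poly_smult poly_diff poly_mult) (simp add: algebra_simps)
qed

lemma D_at1_pos: "j \<le> n \<Longrightarrow> poly (cheb_deriv n j) 1 > 0"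
proof (induction j)
  case 0 then show ?case by (simp add: cd_0 T_at1)
next
  case (Suc j)
  have o: "0 = (2 * real j + 1) * poly (cheb_deriv n (Suc j)) 1 - ((real n)^2 - (real j)^2) * poly (cheb_deriv n j) 1"
    using ODE_pt[of 1 n j] by simp
  have "(real n)^2 - (real j)^2 > 0" using Suc.prems
    by (simp add: power_strict_mono)
  moreover have "poly (cheb_deriv n j) 1 > 0" using Suc by simp
  ultimately have "((real n)^2 - (real j)^2) * poly (cheb_deriv n j) 1 > 0" by simp
  with o have "(2 * real j + 1) * poly (cheb_deriv n (Suc j)) 1 > 0" by linarith
  then show ?case by (simp add: zero_less_mult_iff)
qed

lemma D_pos_ge1: "j \<le> n \<Longrightarrow> x \<ge> 1 \<Longrightarrow> poly (cheb_deriv n j) x > 0"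
proof (induction "n - j" arbitrary: j x)
  case 0
  then have "j = n" by simp
  then show ?case using D_n_const[of n x 1] D_at1_pos[of n n] by simp
next
  case (Suc i)
  then have jn: "Suc j \<le> n" "i = n - Suc j" by auto
  have pos: "\<And>y. y \<ge> 1 \<Longrightarrow> poly (cheb_deriv n (Suc j)) y > 0" using Suc.hyps(1)[OF jn(2) jn(1)] by blast
  have "poly (cheb_deriv n j) 1 \<le> poly (cheb_deriv n j) x"
  proof (rule DERIV_nonneg_imp_nondecreasing[OF Suc.prems(2)])
    fix y :: real assume "1 \<le> y" "y \<le> x"
    then show "\<exists>d. DERIV (poly (cheb_deriv n j)) y :> d \<and> d \<ge> 0"
      using poly_DERIV[of "cheb_deriv n j" y] pos[of y] \<open>1 \<le> y\<close> unfolding cd_Suc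
      by (intro exI[of _ "poly (pderiv (cheb_deriv n j)) y"]) auto
  qed
  then show ?case using D_at1_pos[OF Suc.prems(1)] by linarith
qed



lemma poly_strict_mono:
  fixes q :: "real poly"
  assumes "a < b" "\<And>x. a < x \<Longrightarrow> x < b \<Longrightarrow> poly (pderiv q) x > 0"
  shows "poly q a < poly q b"
proof (rule DERIV_pos_imp_increasing_open[OF assms(1)])
  fix x assume "a < x" "x < b"
  then show "\<exists>y. DERIV (poly q) x :> y \<and> y > 0"
    using assms(2) poly_DERIV[of q x] by blast
next
  show "continuous_on {a..b} (poly q)"
    using continuous_on_poly[OF continuous_on_id, of _ q] by simp
qed

lemma poly_weak_mono:
  fixes q :: "real poly"
  assumes "a \<le> b" "\<And>x. a \<le> x \<Longrightarrow> x \<le> b \<Longrightarrow> poly (pderiv q) x \<ge> 0"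
  shows "poly q a \<le> poly q b"
proof (rule DERIV_nonneg_imp_nondecreasing[OF assms(1)])
  fix x assume "a \<le> x" "x \<le> b"
  then show "\<exists>y. DERIV (poly q) x :> y \<and> y \<ge> 0"
    using assms(2) poly_DERIV[of q x] by blast
qed

lemma D_ne0: "j \<le> n \<Longrightarrow> cheb_deriv n j \<noteq> 0"
  using D_at1_pos[of j n] by auto

lemma omega_props:
  assumes "Suc k \<le> n" "\<exists>x\<ge>0. poly (cheb_deriv n (Suc k)) x = 0"
  shows "poly (cheb_deriv n (Suc k)) (omega n k) = 0" "omega n k \<ge> 0"
    "\<And>x. poly (cheb_deriv n (Suc k)) x = 0 \<Longrightarrow> x \<le> omega n k"
proof -
  let ?S = "{x. poly (cheb_deriv n (Suc k)) x = 0}"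
  have fin: "finite ?S" using poly_roots_finite[OF D_ne0[OF assms(1)]] .
  obtain x0 where x0: "x0 \<ge> 0" "x0 \<in> ?S" using assms(2) by auto
  then have ne: "?S \<noteq> {}" by auto
  show "poly (cheb_deriv n (Suc k)) (omega n k) = 0"
    using Max_in[OF fin ne] unfolding omega_def by simp
  show "\<And>x. poly (cheb_deriv n (Suc k)) x = 0 \<Longrightarrow> x \<le> omega n k"
    using Max_ge[OF fin] unfolding omega_def by simp
  then show "omega n k \<ge> 0" using x0 by force
qed

lemma main:
  assumes k: "k \<ge> 1" and n: "n \<ge> k + 2" and ex: "\<exists>x\<ge>0. poly (cheb_deriv n (Suc k)) x = 0"
  shows "(\<exists>r>0. poly (cheb_deriv (Suc n) (Suc k)) r = 0) \<and> tau (Suc n) k < tau n k"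
proof -
  define P where "P = cheb_deriv n k"
  define P1 where "P1 = cheb_deriv n (Suc k)"
  define P2 where "P2 = cheb_deriv n (Suc (Suc k))"
  define Q where "Q = cheb_deriv (Suc n) k"
  define Q1 where "Q1 = cheb_deriv (Suc n) (Suc k)"
  define N where "N = (real n)^2 - (real k)^2"
  define S where "S = real n + real k"
  define \<alpha> where "\<alpha> = omega n k"
  have dP: "pderiv P = P1" "pderiv P1 = P2" unfolding P_def P1_def P2_def by (simp_all add: cd_Suc)
  have Sk: "Suc k \<le> n" using n by simp
  have kr: "real k \<ge> 1" "real n \<ge> real k + 2" using k n by simp_all
  have Npos: "N > 0" unfolding N_def using kr by (simp add: power_strict_mono)
  have NS: "N = S * (real n - real k)" unfolding N_def S_def by (simp add: power2_eq_square algebra_simps)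
  have ode: "\<And>x. (1 - x*x) * poly P2 x = (2 * real k + 1) * x * poly P1 x - N * poly P x"
    unfolding P_def P1_def P2_def N_def using ODE_pt by blast
  have a0: "poly P1 \<alpha> = 0" "\<alpha> \<ge> 0" and amax: "\<And>x. poly P1 x = 0 \<Longrightarrow> x \<le> \<alpha>"
    using omega_props[OF Sk ex] unfolding P1_def \<alpha>_def by auto
  have M: "poly P 1 > 0" unfolding P_def using D_at1_pos n by simp
  have a1: "\<alpha> < 1"
  proof (rule ccontr)
    assume "\<not> \<alpha> < 1"
    then have "poly P1 \<alpha> > 0" unfolding P1_def using D_pos_ge1[OF Sk] by simp
    then show False using a0 by simp
  qed
  have aa: "1 - \<alpha>*\<alpha> > 0"
  proof -
    have "\<alpha>*\<alpha> \<le> \<alpha>" using a0 a1 by (simp add: mult_left_le)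
    then show ?thesis using a1 by simp
  qed
  have P1pos: "\<And>x. x > \<alpha> \<Longrightarrow> poly P1 x > 0"
  proof -
    fix x assume x: "x > \<alpha>"
    have ne: "poly P1 x \<noteq> 0" using amax x by force
    show "poly P1 x > 0"
    proof (rule ccontr)
      assume "\<not> poly P1 x > 0"
      then have neg: "poly P1 x < 0" using ne by simp
      show False
      proof (cases "x \<ge> 1")
        case True then show False using neg D_pos_ge1[OF Sk, of x] unfolding P1_def by simp
      next
        case False
        have "poly P1 1 > 0" unfolding P1_def using D_at1_pos Sk by simp
        then obtain y where "x < y" "y < 1" "poly P1 y = 0" using poly_IVT_pos[of x 1 P1] neg False by auto
        then show False using amax x by force
      qed
    qed
  qed
  have pmono: "\<And>a b. \<alpha> \<le> a \<Longrightarrow> a < b \<Longrightarrow> poly P a < poly P b"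
    by (rule poly_strict_mono) (auto simp: dP intro!: P1pos)
  have pa_ne: "poly P \<alpha> \<noteq> 0"
  proof
    assume pa: "poly P \<alpha> = 0"
    have "poly (cheb_deriv n (k + i)) \<alpha> = 0 \<and> poly (cheb_deriv n (Suc (k + i))) \<alpha> = 0" for i
    proof (induction i)
      case 0 then show ?case using pa a0 unfolding P_def P1_def by simp
    next
      case (Suc i)
      have "(1 - \<alpha>*\<alpha>) * poly (cheb_deriv n (Suc (Suc (k+i)))) \<alpha> = 0"
        using ODE_pt[of \<alpha> n "k+i"] Suc by simp
      moreover have "1 - \<alpha>*\<alpha> \<noteq> 0" using aa by simp
      ultimately show ?case using Suc by simp
    qed
    from this[of "n - k"] have "poly (cheb_deriv n n) \<alpha> = 0" using n by simp
    then show False using D_n_const[of n \<alpha> 1] D_at1_pos[of n n] by simp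
  qed
  have pa_neg: "poly P \<alpha> < 0"
  proof (rule ccontr)
    assume "\<not> poly P \<alpha> < 0"
    then have "poly P \<alpha> > 0" using pa_ne by simp
    then have "(1 - \<alpha>*\<alpha>) * poly P2 \<alpha> < 0" using ode[of \<alpha>] a0 Npos by simp
    moreover have "1 - \<alpha>*\<alpha> > 0" using aa by simp
    ultimately have "poly P2 \<alpha> < 0" by (simp add: mult_less_0_iff)
    moreover have "DERIV (poly P1) \<alpha> :> poly P2 \<alpha>" using poly_DERIV[of P1 \<alpha>] dP by simp
    ultimately obtain d where "d > 0" "\<forall>h>0. h < d \<longrightarrow> poly P1 \<alpha> > poly P1 (\<alpha> + h)"
      using DERIV_neg_dec_right by blast
    then have "poly P1 (\<alpha> + d/2) < 0" using a0 by force
    moreover have "poly P1 (\<alpha> + d/2) > 0" using P1pos \<open>d > 0\<close> by simp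
    ultimately show False by simp
  qed
  define t where "t = - poly P \<alpha>"
  have t: "t > 0" unfolding t_def using pa_neg by simp
  define M where "M = poly P 1"
  have Mpos: "M > 0" unfolding M_def using M .
  obtain g where g: "\<alpha> < g" "g < 1" "poly (P + smult t X) g = 0"
  proof -
    have "poly (P + smult t X) \<alpha> < 0" using t a1 unfolding t_def by (simp add: algebra_simps)
    moreover have "poly (P + smult t X) 1 > 0" using t M by simp
    ultimately show ?thesis using poly_IVT_pos[OF a1] that by blast
  qed
  have pg: "poly P g = - g * t" using g(3) by (simp add: algebra_simps)
  have gpos: "g > 0" using g a0 by simp
  have gg: "1 - g*g > 0"
  proof -
    have "g*g \<le> g" using gpos g by (simp add: mult_left_le)
    then show ?thesis using g by simp
  qed
  have pneg: "\<And>x. \<alpha> \<le> x \<Longrightarrow> x \<le> g \<Longrightarrow> poly P x < 0"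
  proof -
    fix x assume x: "\<alpha> \<le> x" "x \<le> g"
    have "poly P x \<le> poly P g" using pmono[of x g] x by (cases "x = g") auto
    then show "poly P x < 0" using pg mult_pos_pos[OF gpos t] by linarith
  qed
  have P1nn: "\<And>x. \<alpha> \<le> x \<Longrightarrow> poly P1 x \<ge> 0"
    using P1pos a0 by (metis le_less order.refl)
  have P2pos: "\<And>x. \<alpha> \<le> x \<Longrightarrow> x \<le> g \<Longrightarrow> poly P2 x > 0"
  proof -
    fix x assume x: "\<alpha> \<le> x" "x \<le> g"
    have x1: "1 - x*x > 0"
    proof -
      have "x*x \<le> x" using x a0 g by (simp add: mult_left_le)
      then show ?thesis using x g by simp
    qed
    have "(2 * real k + 1) * x * poly P1 x \<ge> 0" using x a0 P1nn[of x] by simp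
    moreover have "N * poly P x < 0" using Npos pneg[OF x] by (simp add: mult_pos_neg)
    ultimately have "(1 - x*x) * poly P2 x > 0" using ode[of x] by linarith
    then show "poly P2 x > 0" using x1 by (simp add: zero_less_mult_iff)
  qed
  define w where "w = poly P1 g"
  have P1le: "\<And>x. \<alpha> \<le> x \<Longrightarrow> x \<le> g \<Longrightarrow> poly P1 x \<le> w"
  proof -
    fix x assume x: "\<alpha> \<le> x" "x \<le> g"
    show "poly P1 x \<le> w" unfolding w_def
    proof (rule poly_weak_mono[OF x(2)])
      fix y assume "x \<le> y" "y \<le> g"
      then show "poly (pderiv P1) y \<ge> 0" using P2pos[of y] x dP by simp
    qed
  qed
  have w0: "w \<ge> 0" unfolding w_def using P1nn g by simp
  define c where "c = 4 * real k * g * w / N"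
  define Hp where "Hp = P*P + smult (1/N) ([:1,0,-1:] * (P1*P1)) - smult c P"
  have dH: "poly (pderiv Hp) x = 2 * poly P x * poly P1 x + (1/N) * ((1 - x*x) * (2 * poly P1 x * poly P2 x) - 2 * x * poly P1 x * poly P1 x) - c * poly P1 x" for x
    unfolding Hp_def by (simp only: pderiv_diff pderiv_add pderiv_smult poly_diff poly_add poly_smult pd1)
      (simp add: pderiv_mult dP algebra_simps)
  have dH2: "poly (pderiv Hp) x = (4 * real k / N) * poly P1 x * (x * poly P1 x - g * w)" for x
  proof -
    have "(1 - x*x) * (2 * poly P1 x * poly P2 x) = 2 * poly P1 x * ((1 - x*x) * poly P2 x)" by simp
    also have "\<dots> = 2 * poly P1 x * ((2 * real k + 1) * x * poly P1 x - N * poly P x)" using ode by simp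
    finally have e: "(1 - x*x) * (2 * poly P1 x * poly P2 x) = 2 * poly P1 x * ((2 * real k + 1) * x * poly P1 x - N * poly P x)" .
    show ?thesis unfolding dH e c_def using Npos by (simp add: field_simps)
  qed
  have Hle: "poly Hp g \<le> poly Hp \<alpha>"
  proof -
    have "poly (-Hp) \<alpha> \<le> poly (-Hp) g"
    proof (rule poly_weak_mono)
      show "\<alpha> \<le> g" using g by simp
    next
      fix x assume x: "\<alpha> \<le> x" "x \<le> g"
      have "x * poly P1 x \<le> g * w" using x a0 P1nn[of x] P1le[OF x] w0 by (simp add: mult_mono)
      then have "(4 * real k * poly P1 x) * (x * poly P1 x - g * w) \<le> 0"
        using P1nn[OF x(1)] by (intro mult_nonneg_nonpos) auto
      then have "(4 * real k * poly P1 x) * (x * poly P1 x - g * w) / N \<le> 0"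
        using Npos by (simp add: divide_nonpos_pos)
      then have "poly (pderiv Hp) x \<le> 0" unfolding dH2 by (simp add: mult.assoc)
      then show "poly (pderiv (-Hp)) x \<ge> 0" by (simp add: pderiv_minus)
    qed
    then show ?thesis by simp
  qed
  have Hg: "poly Hp g = g*g*t*t + (1-g*g)*w*w/N + c*g*t"
    unfolding Hp_def using pg Npos by (simp add: p1 w_def field_simps)
  have Ha: "poly Hp \<alpha> = t*t + c*t"
    unfolding Hp_def using a0 by (simp add: p1 t_def algebra_simps)
  have st2: "(1-g*g)*w*w - N*(1-g*g)*t*t \<le> 4 * real k * g * w * t * (1-g)"
  proof -
    have "(1-g*g)*w*w/N - (1-g*g)*t*t \<le> c*t*(1-g)"
      using Hle Hg Ha by (simp add: algebra_simps)
    then have "N * ((1-g*g)*w*w/N - (1-g*g)*t*t) \<le> N * (c*t*(1-g))"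
      using Npos by (simp add: mult_left_mono)
    moreover have "N * ((1-g*g)*w*w/N - (1-g*g)*t*t) = (1-g*g)*w*w - N*(1-g*g)*t*t"
      using Npos by (simp add: right_diff_distrib)
    moreover have "N*(c*t*(1-g)) = 4 * real k * g * w * t * (1-g)" unfolding c_def using Npos by simp
    ultimately show ?thesis by simp
  qed
  have st3: "(1+g)*w*w - N*(1+g)*t*t \<le> 4 * real k * g * w * t"
  proof -
    have "(1-g) * ((1+g)*w*w - N*(1+g)*t*t) \<le> (1-g) * (4 * real k * g * w * t)"
      using st2 by (simp add: algebra_simps)
    then show ?thesis using g by (simp add: mult_le_cancel_left)
  qed
  have wlt: "w < S * t"
  proof (rule ccontr)
    assume "\<not> w < S * t"
    define d where "d = w - S*t"
    have d: "d \<ge> 0" "w = S*t + d" using \<open>\<not> w < S * t\<close> unfolding d_def by simp_all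
    have Sge: "S \<ge> 2 * real k + 2" unfolding S_def using kr by simp
    have e: "(1+g)*w*w - N*(1+g)*t*t - 4 * real k * g * w * t
        = 2 * real k * S * (1-g) * t * t + d * t * (2*(1+g)*S - 4 * real k * g) + (1+g)*d*d"
      unfolding d(2) NS S_def by (simp add: algebra_simps power2_eq_square)
    have "2 * real k * S * (1-g) * t * t > 0" using kr Sge g t by simp
    moreover have "2*(1+g)*S - 4 * real k * g \<ge> 0"
    proof -
      have "4 * real k * g \<le> 4 * real k * 1" using g kr by (intro mult_left_mono) auto
      moreover have "2*(1+g)*S \<ge> 2 * S" using gpos Sge by simp
      ultimately show ?thesis using Sge by linarith
    qed
    then have "d * t * (2*(1+g)*S - 4 * real k * g) \<ge> 0" using d t by simp
    moreover have "(1+g)*d*d \<ge> 0" using d gpos by simp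
    ultimately show False using e st3 by linarith
  qed
  define V where "V = X * P1 + smult S P"
  have Vg: "poly V g < 0"
  proof -
    have "poly V g = g * (w - S*t)" unfolding V_def using pg by (simp add: w_def algebra_simps)
    then show ?thesis using gpos wlt by (simp add: mult_pos_neg)
  qed
  have V1: "poly V 1 > 0"
  proof -
    have "S * poly P 1 > 0" using M kr unfolding S_def by simp
    moreover have "poly P1 1 > 0" using D_at1_pos[OF Sk] unfolding P1_def by simp
    ultimately show ?thesis unfolding V_def by simp
  qed
  obtain r where r: "g < r" "r < 1" "poly V r = 0" using poly_IVT_pos[OF g(2) Vg V1] by blast
  have I1pt: "real n * poly Q1 x = (real n + 1) * poly V x" for x
  proof -
    have "poly (smult (real n) (cheb_deriv (Suc n) (Suc k))) x =
      poly (smult (real n + 1) (X * cheb_deriv n (Suc k) + smult (real n + real k) (cheb_deriv n k))) x"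
      using I1 by simp
    then show ?thesis unfolding Q1_def V_def P1_def P_def S_def by simp
  qed
  have npos: "real n > 0" using kr by simp
  have Q1r: "poly Q1 r = 0" using I1pt[of r] r npos by simp
  define \<beta> where "\<beta> = omega (Suc n) k"
  have Sk': "Suc k \<le> Suc n" using Sk by simp
  have exr: "\<exists>x\<ge>0. poly (cheb_deriv (Suc n) (Suc k)) x = 0" using Q1r r gpos unfolding Q1_def
    by (intro exI[of _ r]) simp
  have b0: "poly Q1 \<beta> = 0" and rb: "r \<le> \<beta>"
    using omega_props[OF Sk' exr] Q1r unfolding Q1_def \<beta>_def by auto
  have gb: "g < \<beta>" "\<alpha> < \<beta>" "\<beta> > 0" using rb r g gpos by auto
  have Vb: "poly V \<beta> = 0" using I1pt[of \<beta>] b0 npos by simp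
  have P1b: "poly P1 \<beta> > 0" using P1pos gb by simp
  have Spos: "S > 0" unfolding S_def using kr by simp
  have pbeq: "S * poly P \<beta> = - \<beta> * poly P1 \<beta>" using Vb unfolding V_def by (simp add: algebra_simps)
  have pbneg: "poly P \<beta> < 0"
  proof -
    have "S * poly P \<beta> < 0" using pbeq gb P1b by (simp add: mult_pos_pos)
    then show ?thesis using Spos by (simp add: mult_less_0_iff)
  qed
  have pbgt: "poly P \<beta> > - g * t" using pmono[of g \<beta>] g gb pg by simp
  have num: "- poly P \<beta> < \<beta> * t"
  proof -
    have "g * t < \<beta> * t" using gb t by simp
    then show ?thesis using pbgt by simp
  qed
  have I2pt: "real n * (real n + 1 - real k) * poly Q x = real n * x * poly Q1 x - (real n + 1) * poly P1 x" for x
  proof -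
    have "poly (smult (real n * (real n + 1 - real k)) (cheb_deriv (Suc n) k)) x =
      poly (smult (real n) (X * cheb_deriv (Suc n) (Suc k)) - smult (real n + 1) (cheb_deriv n (Suc k))) x"
      using I2 by simp
    then show ?thesis unfolding Q_def Q1_def P1_def by (simp add: algebra_simps)
  qed
  define K where "K = real n * (real n + 1 - real k)"
  have Kpos: "K > 0" unfolding K_def using npos kr by simp
  have Qb: "K * poly Q \<beta> = (real n + 1) * S * poly P \<beta> / \<beta>"
  proof -
    have "K * poly Q \<beta> = - (real n + 1) * poly P1 \<beta>" using I2pt[of \<beta>] b0 unfolding K_def by (simp add: algebra_simps)
    also have "poly P1 \<beta> = - S * poly P \<beta> / \<beta>" using pbeq gb by (simp add: field_simps)
    finally show ?thesis using gb by (simp add: field_simps)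
  qed
  have Q1v: "K * poly Q 1 = (real n + 1) * S * M"
  proof -
    have "K * poly Q 1 = real n * poly Q1 1 - (real n + 1) * poly P1 1" using I2pt[of 1] unfolding K_def by simp
    also have "real n * poly Q1 1 = (real n + 1) * (poly P1 1 + S * M)" using I1pt[of 1] unfolding V_def M_def by simp
    finally show ?thesis by (simp add: algebra_simps)
  qed
  have tn: "tau n k = t / M"
    unfolding tau_def using pa_neg unfolding P_def M_def t_def \<alpha>_def by simp
  have tn1: "tau (Suc n) k = - poly P \<beta> / (\<beta> * M)"
  proof -
    have "tau (Suc n) k = \<bar>poly Q \<beta>\<bar> / poly Q 1" unfolding tau_def Q_def \<beta>_def by simp
    also have "\<dots> = \<bar>K * poly Q \<beta>\<bar> / (K * poly Q 1)" using Kpos by (simp add: abs_mult)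
    also have "\<dots> = \<bar>(real n + 1) * S * poly P \<beta> / \<beta>\<bar> / ((real n + 1) * S * M)" unfolding Qb Q1v ..
    also have "\<dots> = (real n + 1) * S * (- poly P \<beta>) / \<beta> / ((real n + 1) * S * M)"
      using pbneg gb Spos by (simp add: abs_mult abs_div)
    also have "\<dots> = - poly P \<beta> / (\<beta> * M)"
    proof -
      have "(real n + 1) * S \<noteq> 0" using Spos npos by simp
      then show ?thesis by (metis divide_divide_eq_left mult.commute mult_divide_mult_cancel_left mult_minus_right)
    qed
    finally show ?thesis .
  qed
  have "- poly P \<beta> / (\<beta> * M) < t / M"
  proof -
    have "- poly P \<beta> / \<beta> < t" by (subst pos_divide_less_eq) (use num gb in \<open>auto simp: mult.commute\<close>)
    then have "(- poly P \<beta> / \<beta>) / M < t / M" using Mpos by (rule divide_strict_right_mono)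
    then show ?thesis by (simp add: divide_divide_eq_left)
  qed
  then have "tau (Suc n) k < tau n k" using tn tn1 by simp
  moreover have "r > 0" using r gpos by simp
  ultimately show ?thesis using Q1r unfolding Q1_def by blast
qed



lemma root_ex:
  assumes k: "k \<ge> 1" shows "n \<ge> k + 2 \<Longrightarrow> \<exists>x\<ge>0. poly (cheb_deriv n (Suc k)) x = 0"
proof (induction n rule: dec_induct)
  case base
  have z: "cheb_deriv (k+2) (Suc (Suc (Suc k))) = 0" using D_Suc_n[of "k+2"] by simp
  have o: "(1 - 0*0) * poly (cheb_deriv (k+2) (Suc (Suc (Suc k)))) 0 =
    (2 * real (Suc k) + 1) * 0 * poly (cheb_deriv (k+2) (Suc (Suc k))) 0 - ((real (k+2))^2 - (real (Suc k))^2) * poly (cheb_deriv (k+2) (Suc k)) 0"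
    using ODE_pt[of 0 "k+2" "Suc k"] by simp
  have "(real (k+2))^2 - (real (Suc k))^2 \<noteq> 0" by (simp add: power2_eq_square algebra_simps)
  then have "poly (cheb_deriv (k+2) (Suc k)) 0 = 0" using o z by simp
  then show ?case by auto
next
  case (step n)
  then show ?case using main[OF k step(1)] by (meson less_imp_le)
qed

theorem theorem1p1:
  fixes k :: nat
  assumes "k \<ge> 1"
  shows "(\<forall>n. n \<ge> k + 2 \<longrightarrow> tau (Suc n) k < tau n k)
       \<and> (\<forall>m n. m \<ge> 2 \<longrightarrow> n \<ge> k + m \<longrightarrow> tau n k \<le> tau (k + m) k)"
proof -
  have A: "\<forall>n. n \<ge> k + 2 \<longrightarrow> tau (Suc n) k < tau n k"
    using main[OF assms] root_ex[OF assms] by blast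
  have B: "tau n k \<le> tau (k + m) k" if "m \<ge> 2" "n \<ge> k + m" for m n
    using that(2)
  proof (induction n rule: dec_induct)
    case base then show ?case by simp
  next
    case (step n)
    then have "tau (Suc n) k < tau n k" using A that(1) by simp
    then show ?case using step by simp
  qed
  show ?thesis using A B by blast
qed


end
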